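(* Assume $\rho_1=1$, $\rho_{1,2}<\infty$ and $\rho_2<1$, with $\lambda,B_1,B_2$ not depending on $L$. Then for every fixed integer $j\ge0$, $$\lim_{L\to\infty}L\,q_{L-j}=1,$$ where $q_{L-j}=q_{L-j}(L)$ is the stationary probability that the number in system equals $L-j$ in the system with threshold $L$.
   Context: Queueing model: Poisson arrivals of rate $\lambda>0$ to a single server; independent service times; for a threshold integer $L\ge1$, a customer whose service begins when the number of customers in the system exceeds $L$ is served with distribution function $B_2$, otherwise with $B_1$. Put $\rho_1=\lambda\int_0^\infty x\,dB_1(x)$, $\rho_{1,2}=\lambda^2\int_0^\infty x^2\,dB_1(x)$, $\rho_2=\lambda\int_0^\infty x\,dB_2(x)$. For each $L$, $q_i$ ($i=1,\dots,L$) denotes the stationary probability that the number of customers in the system equals $i$. *)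

theory Defs
  imports "HOL-Probability.Probability"
begin

text \<open>Probability that a Poisson process of rate lam has exactly k arrivals
  during a service time distributed according to B.\<close>
definition arrivals_during :: "real \<Rightarrow> real measure \<Rightarrow> nat \<Rightarrow> real" where
  "arrivals_during lam B k = (\<integral>x. exp (- lam * x) * (lam * x) ^ k / fact k \<partial>B)"

text \<open>Transition probabilities of the number in system embedded at departure
  epochs for threshold L: a service starting with more than L customers in the
  system uses B2, otherwise B1 (a service starting after an idle period starts
  with 1 customer in the system, hence uses B1).\<close>
definition thr_trans ::
  "real \<Rightarrow> real measure \<Rightarrow> real measure \<Rightarrow> nat \<Rightarrow> nat \<Rightarrow> nat \<Rightarrow> real" where
  "thr_trans lam B1 B2 L i j =
     (if i = 0 then arrivals_during lam B1 j
      else if j + 1 < i then 0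
      else if i \<le> L then arrivals_during lam B1 (j + 1 - i)
      else arrivals_during lam B2 (j + 1 - i))"

definition stationary_dist :: "(nat \<Rightarrow> nat \<Rightarrow> real) \<Rightarrow> (nat \<Rightarrow> real) \<Rightarrow> bool" where
  "stationary_dist P q \<longleftrightarrow>
     (\<forall>i. 0 \<le> q i) \<and> q sums 1 \<and> (\<forall>j. (\<lambda>i. q i * P i j) sums q j)"

end

theory Submission
  imports Defs
begin


function ren :: "(nat \<Rightarrow> real) \<Rightarrow> (nat \<Rightarrow> real) \<Rightarrow> nat \<Rightarrow> real" where
  "ren f b n = b n + (\<Sum>i<n. f (n - i) * ren f b i)"
  by auto
termination by (relation "Wellfounded.measure (\<lambda>(f,b,n). n)") auto

declare ren.simps[simp del]

locale renew =
  fixes f b :: "nat \<Rightarrow> real"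
  assumes f0: "f 0 = 0" and fnn: "\<And>m. f m \<ge> 0" and fsum: "f sums 1" and f1: "f 1 > 0"
    and Rsum: "summable (\<lambda>m. 1 - (\<Sum>k\<le>m. f k))"
    and bnn: "\<And>n. b n \<ge> 0" and bsum: "summable b"
begin

definition "u = ren f b"
definition "R m = 1 - (\<Sum>k\<le>m. f k)"

lemma u_eq: "u n = b n + (\<Sum>i<n. f (n-i) * u i)"
  unfolding u_def by (rule ren.simps)

lemma F_le1: "(\<Sum>k\<le>m. f k) \<le> 1"
proof -
  have "(\<Sum>k\<in>{..m}. f k) \<le> suminf f"
    by (rule sum_le_suminf) (use fsum fnn in \<open>auto simp: sums_iff\<close>)
  then show ?thesis using fsum by (simp add: sums_iff)
qed

lemma R_nn: "R m \<ge> 0" using F_le1 by (simp add: R_def)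
lemma R0: "R 0 = 1" by (simp add: R_def f0)
lemma R_Suc: "R (Suc m) = R m - f (Suc m)" by (simp add: R_def)
lemma R_le1: "R m \<le> 1" using fnn by (simp add: R_def sum_nonneg)
lemma f_le1: "f m \<le> 1"
proof -
  have "f m \<le> (\<Sum>k\<le>m. f k)" by (rule member_le_sum) (auto simp: fnn)
  then show ?thesis using F_le1[of m] by linarith
qed
lemma R_lim: "R \<longlonglongrightarrow> 0"
proof -
  have "(\<lambda>n. \<Sum>k<n. f k) \<longlonglongrightarrow> 1" using fsum by (simp add: sums_def)
  then have "(\<lambda>n. \<Sum>k<Suc n. f k) \<longlonglongrightarrow> 1" by (rule LIMSEQ_Suc)
  then have "(\<lambda>n. 1 - (\<Sum>k<Suc n. f k)) \<longlonglongrightarrow> 1 - 1" by (intro tendsto_intros)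
  then show ?thesis by (simp add: R_def[abs_def] lessThan_Suc_atMost)
qed
lemma R_summable: "summable R" using Rsum by (simp add: R_def[abs_def])

lemma tail_id: "(\<Sum>i\<le>n. R (n-i) * u i) = (\<Sum>k\<le>n. b k)"
proof (induction n)
  case 0
  then show ?case by (simp add: R0 u_eq[of 0])
next
  case (Suc n)
  have "(\<Sum>i\<le>Suc n. R (Suc n - i) * u i) = u (Suc n) + (\<Sum>i\<le>n. R (Suc n - i) * u i)"
    by (simp add: R0)
  also have "(\<Sum>i\<le>n. R (Suc n - i) * u i) = (\<Sum>i\<le>n. R (n - i) * u i) - (\<Sum>i\<le>n. f (Suc n - i) * u i)"
    by (simp add: Suc_diff_le R_Suc left_diff_distrib sum_subtractf)
  also have "(\<Sum>i\<le>n. f (Suc n - i) * u i) = (\<Sum>i<Suc n. f (Suc n - i) * u i)"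
    by (simp add: lessThan_Suc_atMost)
  finally show ?case using Suc u_eq[of "Suc n"] by simp
qed

lemma u_nn: "u n \<ge> 0"
proof (induction n rule: less_induct)
  case (less n)
  show ?case unfolding u_eq[of n]
    by (intro add_nonneg_nonneg sum_nonneg mult_nonneg_nonneg bnn fnn less) auto
qed

lemma u_le: "u n \<le> suminf b"
proof -
  have "u n = R (n - n) * u n" by (simp add: R0)
  also have "\<dots> \<le> (\<Sum>i\<le>n. R (n-i) * u i)"
    by (rule member_le_sum) (auto intro: mult_nonneg_nonneg R_nn u_nn)
  also have "\<dots> = (\<Sum>k\<le>n. b k)" by (rule tail_id)
  also have "\<dots> \<le> suminf b" by (rule sum_le_suminf) (auto simp: bsum bnn)
  finally show ?thesis .
qed

lemma frev: "(\<Sum>i<n. f (n-i)) = (\<Sum>k\<le>n. f k)"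
proof (induction n)
  case 0 then show ?case by (simp add: f0)
next
  case (Suc n)
  have "(\<Sum>i<Suc n. f (Suc n - i)) = f (Suc n) + (\<Sum>i<n. f (Suc n - Suc i))"
    by (subst sum.lessThan_Suc_shift) simp
  then show ?case using Suc by simp
qed

lemma fl_minus: "filterlim s at_top sequentially \<Longrightarrow> filterlim (\<lambda>k. s k - m) at_top sequentially"
  for s :: "nat \<Rightarrow> nat"
  unfolding filterlim_at_top
proof (intro allI)
  fix Z assume "\<forall>Z. eventually (\<lambda>k. Z \<le> s k) sequentially"
  then have "eventually (\<lambda>k. Z + m \<le> s k) sequentially" by blast
  then show "eventually (\<lambda>k. Z \<le> s k - m) sequentially" by eventually_elim auto
qed

lemma f_lim: "f \<longlonglongrightarrow> 0" using fsum summable_LIMSEQ_zero sums_summable by blast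
lemma b_lim: "b \<longlonglongrightarrow> 0" using bsum summable_LIMSEQ_zero by blast

lemma D_lim:
  assumes "filterlim s at_top sequentially"
  shows "(\<lambda>k. \<Sum>i<n0. f (s k - i)) \<longlonglongrightarrow> 0"
proof -
  have "(\<lambda>k. f (s k - i)) \<longlonglongrightarrow> 0" for i
    by (rule filterlim_compose[OF f_lim fl_minus[OF assms]])
  then have "(\<lambda>k. \<Sum>i<n0. f (s k - i)) \<longlonglongrightarrow> (\<Sum>i<n0. 0)" by (intro tendsto_sum) auto
  then show ?thesis by simp
qed

lemma F_lim: "(\<lambda>n. \<Sum>k\<le>n. f k) \<longlonglongrightarrow> 1"
proof -
  have "(\<lambda>n. \<Sum>k<n. f k) \<longlonglongrightarrow> 1" using fsum by (simp add: sums_def)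
  then have "(\<lambda>n. \<Sum>k<Suc n. f k) \<longlonglongrightarrow> 1" by (rule LIMSEQ_Suc)
  then show ?thesis by (simp add: lessThan_Suc_atMost)
qed

lemma u_split: "n \<ge> 1 \<Longrightarrow> u n = b n + f 1 * u (n-1) + (\<Sum>i<n-1. f (n-i) * u i)"
proof -
  assume "n \<ge> 1"
  then obtain m where n: "n = Suc m" by (cases n) auto
  show ?thesis unfolding u_eq[of n] by (simp add: n add.assoc)
qed

lemma G_eq: "n \<ge> 1 \<Longrightarrow> (\<Sum>i<n-1. f (n-i)) = (\<Sum>k\<le>n. f k) - f 1"
proof -
  assume "n \<ge> 1"
  then obtain m where n: "n = Suc m" by (cases n) auto
  have "(\<Sum>i<n. f (n-i)) = (\<Sum>k\<le>n. f k)" by (rule frev)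
  then show ?thesis by (simp add: n)
qed

lemma ind_le: "(\<Sum>i<n-1. f (n-i) * (if i < n0 then 1 else 0)) \<le> (\<Sum>i<n0. f (n-i))"
proof -
  have "(\<Sum>i<n-1. f (n-i) * (if i < n0 then 1 else 0)) = (\<Sum>i\<in>{..<n-1} \<inter> {..<n0}. f (n-i))"
    by (simp add: sum.inter_restrict if_distrib cong: if_cong)
  also have "\<dots> \<le> (\<Sum>i<n0. f (n-i))"
    by (rule sum_mono2) (auto simp: fnn)
  finally show ?thesis .
qed

lemma shift_up:
  assumes s: "filterlim s at_top sequentially" and lim: "(\<lambda>k. u (s k)) \<longlonglongrightarrow> l"
    and ev: "\<And>e. e > 0 \<Longrightarrow> eventually (\<lambda>n. u n \<le> l + e) sequentially"
  shows "(\<lambda>k. u (s k - 1)) \<longlonglongrightarrow> l"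
proof (rule order_tendstoI)
  fix a assume "l < a"
  then have "eventually (\<lambda>n. u n \<le> l + (a - l)/2) sequentially" by (intro ev) simp
  from eventually_compose_filterlim[OF this fl_minus[OF s, of 1]]
  show "eventually (\<lambda>k. u (s k - 1) < a) sequentially"
    by (rule eventually_mono) (use \<open>l < a\<close> in \<open>simp add: field_simps\<close>)
next
  fix a assume "a < l"
  define d where "d = l - a"
  have d: "d > 0" using \<open>a < l\<close> by (simp add: d_def)
  define e where "e = d * f 1 / 4"
  have e: "e > 0" using d f1 by (simp add: e_def)
  define \<beta> where "\<beta> = suminf b"
  from ev[OF e] obtain n0 where n0: "\<And>n. n \<ge> n0 \<Longrightarrow> u n \<le> l + e"
    by (auto simp: eventually_sequentially)
  have l0: "l \<ge> 0"
    by (rule LIMSEQ_le_const[OF lim]) (auto intro: u_nn)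
  have ub: "u i \<le> (l + e) + \<beta> * (if i < n0 then 1 else 0)" for i
  proof (cases "i < n0")
    case True then show ?thesis using u_le[of i] l0 e by (simp add: \<beta>_def)
  next
    case False then show ?thesis using n0[of i] by simp
  qed
  have key: "u n \<le> b n + f 1 * u (n-1) + (l+e) * (1 - f 1) + \<beta> * (\<Sum>i<n0. f (n-i))" if "n \<ge> 1" for n
  proof -
    have "(\<Sum>i<n-1. f (n-i) * u i) \<le> (\<Sum>i<n-1. f (n-i) * ((l + e) + \<beta> * (if i < n0 then 1 else 0)))"
      by (intro sum_mono mult_left_mono ub fnn)
    also have "\<dots> = (l+e) * (\<Sum>i<n-1. f (n-i)) + \<beta> * (\<Sum>i<n-1. f (n-i) * (if i < n0 then 1 else 0))"
      by (simp add: algebra_simps sum.distrib sum_distrib_left)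
    also have "\<dots> \<le> (l+e) * (1 - f 1) + \<beta> * (\<Sum>i<n0. f (n-i))"
    proof (intro add_mono mult_left_mono ind_le)
      show "(\<Sum>i<n-1. f (n-i)) \<le> 1 - f 1" using G_eq[OF that] F_le1[of n] by simp
      show "0 \<le> l + e" using l0 e by simp
      show "0 \<le> \<beta>" unfolding \<beta>_def by (intro suminf_nonneg bsum bnn)
    qed
    finally show ?thesis using u_split[OF that] by linarith
  qed
  define y where "y k = u (s k) - b (s k) - (l+e) * (1 - f 1) - \<beta> * (\<Sum>i<n0. f (s k - i))" for k
  have "y \<longlonglongrightarrow> l - 0 - (l+e) * (1 - f 1) - \<beta> * 0"
    unfolding y_def[abs_def]
    by (intro tendsto_intros lim D_lim s filterlim_compose[OF b_lim s])
  moreover have "l * f 1 - 2 * e < l - 0 - (l+e) * (1 - f 1) - \<beta> * 0"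
    using e f1 f_le1[of 1] by (simp add: algebra_simps) (smt (verit) mult_pos_pos)
  ultimately have ev1: "eventually (\<lambda>k. l * f 1 - 2 * e < y k) sequentially"
    by (rule order_tendstoD)
  have ev2: "eventually (\<lambda>k. s k \<ge> 1) sequentially"
    using s by (simp add: filterlim_at_top)
  show "eventually (\<lambda>k. a < u (s k - 1)) sequentially"
    using ev1 ev2
  proof eventually_elim
    case (elim k)
    have "y k \<le> f 1 * u (s k - 1)" using key[OF elim(2)] by (simp add: y_def)
    then have "l * f 1 - 2 * e < f 1 * u (s k - 1)" using elim(1) by linarith
    then have "f 1 * (l - d/2) < f 1 * u (s k - 1)" by (simp add: e_def algebra_simps)
    then have "l - d/2 < u (s k - 1)" using f1 by (simp add: mult_less_cancel_left)
    then show ?case using \<open>a < l\<close> unfolding d_def by (simp add: field_simps)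
  qed
qed

lemma shift_lo:
  assumes s: "filterlim s at_top sequentially" and lim: "(\<lambda>k. u (s k)) \<longlonglongrightarrow> l"
    and ev: "\<And>e. e > 0 \<Longrightarrow> eventually (\<lambda>n. l - e \<le> u n) sequentially"
  shows "(\<lambda>k. u (s k - 1)) \<longlonglongrightarrow> l"
proof (rule order_tendstoI)
  fix a assume "a < l"
  then have "eventually (\<lambda>n. l - (l - a)/2 \<le> u n) sequentially" by (intro ev) simp
  from eventually_compose_filterlim[OF this fl_minus[OF s, of 1]]
  show "eventually (\<lambda>k. a < u (s k - 1)) sequentially"
    by (rule eventually_mono) (use \<open>a < l\<close> in \<open>simp add: field_simps\<close>)
next
  fix a assume "l < a"
  define d where "d = a - l"
  have d: "d > 0" using \<open>l < a\<close> by (simp add: d_def)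
  define e where "e = d * f 1 / 4"
  have e: "e > 0" using d f1 by (simp add: e_def)
  from ev[OF e] obtain n0 where n0: "\<And>n. n \<ge> n0 \<Longrightarrow> l - e \<le> u n"
    by (auto simp: eventually_sequentially)
  have l0: "l \<ge> 0"
    by (rule LIMSEQ_le_const[OF lim]) (auto intro: u_nn)
  have lb: "(l - e) - l * (if i < n0 then 1 else 0) \<le> u i" for i
  proof (cases "i < n0")
    case True then show ?thesis using u_nn[of i] e by simp
  next
    case False then show ?thesis using n0[of i] by simp
  qed
  have key: "f 1 * u (n-1) + (l-e) * ((\<Sum>k\<le>n. f k) - f 1) - l * (\<Sum>i<n0. f (n-i)) \<le> u n" if "n \<ge> 1" for n
  proof -
    have "(l-e) * ((\<Sum>k\<le>n. f k) - f 1) - l * (\<Sum>i<n0. f (n-i))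
        \<le> (l-e) * (\<Sum>i<n-1. f (n-i)) - l * (\<Sum>i<n-1. f (n-i) * (if i < n0 then 1 else 0))"
      using G_eq[OF that] mult_left_mono[OF ind_le l0, of n n0] by simp
    also have "\<dots> = (\<Sum>i<n-1. f (n-i) * ((l - e) - l * (if i < n0 then 1 else 0)))"
      by (simp add: algebra_simps sum_subtractf sum_distrib_left sum.distrib)
    also have "\<dots> \<le> (\<Sum>i<n-1. f (n-i) * u i)"
      by (intro sum_mono mult_left_mono lb fnn)
    finally show ?thesis using u_split[OF that] bnn[of n] by linarith
  qed
  define z where "z k = u (s k) - (l-e) * ((\<Sum>j\<le>s k. f j) - f 1) + l * (\<Sum>i<n0. f (s k - i))" for k
  have "z \<longlonglongrightarrow> l - (l-e) * (1 - f 1) + l * 0"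
    unfolding z_def[abs_def]
    by (intro tendsto_intros lim D_lim s filterlim_compose[OF F_lim s])
  moreover have "l - (l-e) * (1 - f 1) + l * 0 < l * f 1 + 2 * e"
    using e f1 f_le1[of 1] by (simp add: algebra_simps) (smt (verit) mult_pos_pos)
  ultimately have ev1: "eventually (\<lambda>k. z k < l * f 1 + 2 * e) sequentially"
    by (rule order_tendstoD)
  have ev2: "eventually (\<lambda>k. s k \<ge> 1) sequentially"
    using s by (simp add: filterlim_at_top)
  show "eventually (\<lambda>k. u (s k - 1) < a) sequentially"
    using ev1 ev2
  proof eventually_elim
    case (elim k)
    have "f 1 * u (s k - 1) \<le> z k" using key[OF elim(2)] by (simp add: z_def)
    then have "f 1 * u (s k - 1) < l * f 1 + 2 * e" using elim(1) by linarith
    then have "f 1 * u (s k - 1) < f 1 * (l + d/2)" by (simp add: e_def algebra_simps)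
    then have "u (s k - 1) < l + d/2" using f1 by (simp add: mult_less_cancel_left)
    then show ?case using \<open>l < a\<close> unfolding d_def by (simp add: field_simps)
  qed
qed

lemma shift_all_up:
  assumes s: "filterlim s at_top sequentially" and lim: "(\<lambda>k. u (s k)) \<longlonglongrightarrow> l"
    and ev: "\<And>e. e > 0 \<Longrightarrow> eventually (\<lambda>n. u n \<le> l + e) sequentially"
  shows "(\<lambda>k. u (s k - m)) \<longlonglongrightarrow> l"
proof (induction m)
  case 0 then show ?case using lim by simp
next
  case (Suc m)
  have "(\<lambda>k. u (s k - m - 1)) \<longlonglongrightarrow> l"
    by (rule shift_up[OF fl_minus[OF s] Suc ev])
  then show ?case by simp
qed

lemma shift_all_lo:
  assumes s: "filterlim s at_top sequentially" and lim: "(\<lambda>k. u (s k)) \<longlonglongrightarrow> l"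
    and ev: "\<And>e. e > 0 \<Longrightarrow> eventually (\<lambda>n. l - e \<le> u n) sequentially"
  shows "(\<lambda>k. u (s k - m)) \<longlonglongrightarrow> l"
proof (induction m)
  case 0 then show ?case using lim by simp
next
  case (Suc m)
  have "(\<lambda>k. u (s k - m - 1)) \<longlonglongrightarrow> l"
    by (rule shift_lo[OF fl_minus[OF s] Suc ev])
  then show ?case by simp
qed

lemma tail_id': "(\<Sum>m\<le>n. R m * u (n - m)) = (\<Sum>k\<le>n. b k)"
proof -
  have "(\<Sum>m\<le>n. R m * u (n - m)) = (\<Sum>i\<le>n. R (n-i) * u i)"
    by (rule sum.reindex_bij_witness[where i="\<lambda>i. n - i" and j="\<lambda>i. n - i"]) auto
  then show ?thesis using tail_id by simp
qed

lemma step2: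
  assumes s: "filterlim s at_top sequentially" and all: "\<And>m. (\<lambda>k. u (s k - m)) \<longlonglongrightarrow> l"
  shows "l * suminf R = suminf b"
proof -
  define a where "a m k = (if m \<le> s k then R m * u (s k - m) else 0)" for m k
  have lim: "(\<lambda>k. a m k) \<longlonglongrightarrow> R m * l" for m
  proof -
    have "eventually (\<lambda>k. m \<le> s k) sequentially" using s by (simp add: filterlim_at_top)
    then have "eventually (\<lambda>k. R m * u (s k - m) = a m k) sequentially"
      by eventually_elim (simp add: a_def)
    moreover have "(\<lambda>k. R m * u (s k - m)) \<longlonglongrightarrow> R m * l" by (intro tendsto_intros all)
    ultimately show ?thesis by (rule Lim_transform_eventually[rotated])
  qed
  have bound: "eventually (\<lambda>(m,k). norm (a m k) \<le> suminf b * R m) (at_top \<times>\<^sub>F sequentially)"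
  proof (rule always_eventually, clarify)
    fix m k
    show "norm (a m k) \<le> suminf b * R m"
      using u_le[of "s k - m"] u_nn[of "s k - m"] R_nn[of m]
      by (auto simp: a_def abs_mult mult.commute[of "R m"] intro: mult_right_mono suminf_nonneg bsum bnn)
  qed
  have "summable (\<lambda>m. suminf b * R m)" by (intro summable_mult R_summable)
  from tannerys_theorem[OF lim bound this] 
  have T: "(\<lambda>k. suminf (\<lambda>m. a m k)) \<longlonglongrightarrow> suminf (\<lambda>m. R m * l)" by simp
  have "suminf (\<lambda>m. a m k) = (\<Sum>m\<le>s k. R m * u (s k - m))" for k
  proof -
    have "(\<lambda>m. a m k) sums (\<Sum>m\<in>{..s k}. R m * u (s k - m))"
      using sums_If_finite_set[of "{..s k}" "\<lambda>m. R m * u (s k - m)"] by (simp add: a_def[abs_def])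
    then show ?thesis by (simp add: sums_iff)
  qed
  then have "suminf (\<lambda>m. a m k) = (\<Sum>j\<le>s k. b j)" for k by (simp add: tail_id')
  moreover have "(\<lambda>k. \<Sum>j\<le>s k. b j) \<longlonglongrightarrow> suminf b"
  proof -
    have "(\<lambda>n. \<Sum>j<n. b j) \<longlonglongrightarrow> suminf b" using bsum by (simp add: summable_LIMSEQ)
    then have "(\<lambda>n. \<Sum>j<Suc n. b j) \<longlonglongrightarrow> suminf b" by (rule LIMSEQ_Suc)
    then have "(\<lambda>n. \<Sum>j\<le>n. b j) \<longlonglongrightarrow> suminf b" by (simp add: lessThan_Suc_atMost)
    then show ?thesis by (rule filterlim_compose[OF _ s])
  qed
  ultimately have "(\<lambda>k. suminf (\<lambda>m. a m k)) \<longlonglongrightarrow> suminf b" by simp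
  with T have "suminf (\<lambda>m. R m * l) = suminf b" by (rule LIMSEQ_unique)
  then show ?thesis using suminf_mult2[OF R_summable, of l] by (simp add: mult.commute)
qed

lemma mu_pos: "suminf R \<ge> 1"
proof -
  have "(\<Sum>m\<in>{..<1}. R m) \<le> suminf R" by (rule sum_le_suminf) (auto simp: R_summable R_nn)
  then show ?thesis by (simp add: R0)
qed

theorem renewal: "u \<longlonglongrightarrow> suminf b / suminf R"
proof -
  define c where "c = suminf b / suminf R"
  have mu: "suminf R > 0" using mu_pos by simp
  have bd: "eventually (\<lambda>n. ereal (u n) \<le> ereal (suminf b)) sequentially"
           "eventually (\<lambda>n. ereal 0 \<le> ereal (u n)) sequentially"
    using u_le u_nn by auto
  have ls_le: "limsup (\<lambda>n. ereal (u n)) \<le> ereal (suminf b)" by (rule Limsup_bounded[OF bd(1)])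
  have li_ge: "ereal 0 \<le> liminf (\<lambda>n. ereal (u n))" by (rule Liminf_bounded[OF bd(2)])
  have li_ls: "liminf (\<lambda>n. ereal (u n)) \<le> limsup (\<lambda>n. ereal (u n))"
    by (rule Liminf_le_Limsup) simp
  obtain l where l: "limsup (\<lambda>n. ereal (u n)) = ereal l"
    using ls_le li_ge li_ls by (cases "limsup (\<lambda>n. ereal (u n))") auto
  obtain l' where l': "liminf (\<lambda>n. ereal (u n)) = ereal l'"
    using ls_le li_ge li_ls by (cases "liminf (\<lambda>n. ereal (u n))") auto
  have "l = c"
  proof -
    obtain r :: "nat \<Rightarrow> nat" where r: "strict_mono r" "((\<lambda>n. ereal (u n)) o r) \<longlonglongrightarrow> limsup (\<lambda>n. ereal (u n))"
      using limsup_subseq_lim by blast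
    have s: "filterlim r at_top sequentially" using filterlim_subseq[OF r(1)] by simp
    have lim: "(\<lambda>k. u (r k)) \<longlonglongrightarrow> l" using r(2) l by (simp add: o_def)
    have ev: "eventually (\<lambda>n. u n \<le> l + e) sequentially" if "e > 0" for e
    proof -
      have "ereal (l + e) > limsup (\<lambda>n. ereal (u n))" using l that by simp
      from Limsup_lessD[OF this] show ?thesis by eventually_elim simp
    qed
    have "l * suminf R = suminf b" by (rule step2[OF s shift_all_up[OF s lim ev]])
    then show ?thesis using mu by (simp add: c_def field_simps)
  qed
  moreover have "l' = c"
  proof -
    obtain r :: "nat \<Rightarrow> nat" where r: "strict_mono r" "((\<lambda>n. ereal (u n)) o r) \<longlonglongrightarrow> liminf (\<lambda>n. ereal (u n))"
      using liminf_subseq_lim by blast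
    have s: "filterlim r at_top sequentially" using filterlim_subseq[OF r(1)] by simp
    have lim: "(\<lambda>k. u (r k)) \<longlonglongrightarrow> l'" using r(2) l' by (simp add: o_def)
    have ev: "eventually (\<lambda>n. l' - e \<le> u n) sequentially" if "e > 0" for e
    proof -
      have "ereal (l' - e) < liminf (\<lambda>n. ereal (u n))" using l' that by simp
      from less_LiminfD[OF this] show ?thesis by eventually_elim simp
    qed
    have "l' * suminf R = suminf b" by (rule step2[OF s shift_all_lo[OF s lim ev]])
    then show ?thesis using mu by (simp add: c_def field_simps)
  qed
  ultimately show ?thesis
    using l l' limsup_le_liminf_real[of u c] unfolding c_def by simp
qed

end


lemma tail_sums:
  fixes a w :: "nat \<Rightarrow> real"
  assumes ann: "\<And>k. a k \<ge> 0" and wnn: "\<And>k. w k \<ge> 0" and as: "a sums s"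
    and Ws: "summable (\<lambda>k. (\<Sum>m<k. w m) * a k)"
  shows "(\<lambda>m. w m * (s - (\<Sum>k\<le>m. a k))) sums (\<Sum>k. (\<Sum>m<k. w m) * a k)"
proof -
  define W where "W k = (\<Sum>m<k. w m)" for k
  define T where "T M = s - (\<Sum>k<M. a k)" for M
  have Tsuc: "s - (\<Sum>k\<le>m. a k) = T (Suc m)" for m by (simp add: T_def lessThan_Suc_atMost)
  have id: "(\<Sum>m<M. w m * T (Suc m)) = (\<Sum>k<M. W k * a k) + W M * T M" for M
  proof (induction M)
    case 0 then show ?case by (simp add: W_def)
  next
    case (Suc M)
    have "T M = a M + T (Suc M)" by (simp add: T_def)
    then show ?case using Suc by (simp add: W_def algebra_simps)
  qed
  have asum: "summable a" using as by (simp add: sums_iff)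
  have Tshift: "T M = (\<Sum>k. a (k + M))" for M
    using suminf_minus_initial_segment[OF asum, of M] as by (simp add: T_def sums_iff)
  have Wmono: "W M \<le> W (k + M)" for k M
    unfolding W_def by (rule sum_mono2) (auto simp: wnn)
  have Wnn: "W M \<ge> 0" for M unfolding W_def by (simp add: sum_nonneg wnn)
  have lim0: "(\<lambda>M. W M * T M) \<longlonglongrightarrow> 0"
  proof (rule tendsto_sandwich[of "\<lambda>_. 0" _ _ "\<lambda>M. (\<Sum>k. W (k+M) * a (k+M))"])
    show "eventually (\<lambda>M. 0 \<le> W M * T M) sequentially"
      by (intro always_eventually allI mult_nonneg_nonneg Wnn)
         (simp add: Tshift suminf_nonneg summable_ignore_initial_segment asum ann)
    show "eventually (\<lambda>M. W M * T M \<le> (\<Sum>k. W (k+M) * a (k+M))) sequentially"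
    proof (intro always_eventually allI)
      fix M
      have "W M * T M = (\<Sum>k. W M * a (k + M))"
        by (simp add: Tshift suminf_mult summable_ignore_initial_segment asum)
      also have "\<dots> \<le> (\<Sum>k. W (k+M) * a (k+M))"
        using Ws unfolding W_def[symmetric]
        by (intro suminf_le mult_right_mono Wmono ann summable_mult summable_ignore_initial_segment asum)
           (auto intro: summable_ignore_initial_segment)
      finally show "W M * T M \<le> (\<Sum>k. W (k+M) * a (k+M))" .
    qed
    have "(\<lambda>M. (\<Sum>k. W (k+M) * a (k+M))) = (\<lambda>M. (\<Sum>k. W k * a k) - (\<Sum>k<M. W k * a k))"
      using suminf_minus_initial_segment Ws unfolding W_def[symmetric] by auto
    moreover have "(\<lambda>M. (\<Sum>k. W k * a k) - (\<Sum>k<M. W k * a k)) \<longlonglongrightarrow> (\<Sum>k. W k * a k) - (\<Sum>k. W k * a k)"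
      using Ws unfolding W_def[symmetric] by (intro tendsto_intros summable_LIMSEQ)
    ultimately show "(\<lambda>M. (\<Sum>k. W (k+M) * a (k+M))) \<longlonglongrightarrow> 0" by simp
  qed auto
  have "(\<lambda>M. (\<Sum>k<M. W k * a k) + W M * T M) \<longlonglongrightarrow> (\<Sum>k. W k * a k) + 0"
    using Ws unfolding W_def[symmetric] by (intro tendsto_intros summable_LIMSEQ lim0)
  then show ?thesis
    unfolding sums_def Tsuc id W_def by simp
qed

definition pois :: "real \<Rightarrow> nat \<Rightarrow> real" where
  "pois y k = exp (- y) * y ^ k / fact k"

lemma pois_nn: "y \<ge> 0 \<Longrightarrow> pois y k \<ge> 0" by (simp add: pois_def)

lemma pois_sums: "(\<lambda>k. pois y k) sums 1"
proof -
  have "(\<lambda>n. y^n / fact n) sums exp y" using exp_converges[of y] by (simp add: divide_inverse mult.commute)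
  from sums_mult[OF this, of "exp (-y)"] show ?thesis
    by (simp add: pois_def exp_minus field_simps)
qed

lemma pois_Suc: "real (Suc k) * pois y (Suc k) = y * pois y k"
proof -
  have "(fact k :: real) \<noteq> 0" by simp
  moreover have "real (Suc k) \<noteq> 0" by simp
  ultimately show ?thesis
    unfolding pois_def fact_Suc by (simp add: field_simps del: of_nat_Suc)
qed

lemma pois1_sums: "(\<lambda>k. real k * pois y k) sums y"
proof -
  have "(\<lambda>k. real (Suc k) * pois y (Suc k)) = (\<lambda>k. y * pois y k)"
    by (rule ext) (rule pois_Suc)
  then have "(\<lambda>k. real (Suc k) * pois y (Suc k)) sums (y * 1)"
    using sums_mult[OF pois_sums, of y] by simp
  then show ?thesis using sums_Suc_iff[of "\<lambda>k. real k * pois y k" "y*1"] by simp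
qed

lemma pois2_sums: "(\<lambda>k. real k * (real k - 1) * pois y k) sums (y ^ 2)"
proof -
  have "(\<lambda>k. real (Suc k) * (real (Suc k) - 1) * pois y (Suc k)) = (\<lambda>k. y * (real k * pois y k))"
  proof (rule ext)
    fix k
    have "real (Suc k) * (real (Suc k) - 1) * pois y (Suc k) = real k * (real (Suc k) * pois y (Suc k))"
      by (simp add: algebra_simps)
    also have "\<dots> = y * (real k * pois y k)" by (simp only: pois_Suc) (simp add: algebra_simps)
    finally show "real (Suc k) * (real (Suc k) - 1) * pois y (Suc k) = y * (real k * pois y k)" .
  qed
  then have "(\<lambda>k. real (Suc k) * (real (Suc k) - 1) * pois y (Suc k)) sums (y * y)"
    using sums_mult[OF pois1_sums, of y] by simp
  then show ?thesis using sums_Suc_iff[of "\<lambda>k. real k * (real k - 1) * pois y k" "y*y"]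
    by (simp add: power2_eq_square)
qed


lemma sums_integral_nn:
  fixes B :: "real measure" and g :: "nat \<Rightarrow> real \<Rightarrow> real" and G :: "real \<Rightarrow> real"
  assumes Bnn: "AE x in B. 0 \<le> x" and lam: "lam > 0"
    and gnn: "\<And>k y. y \<ge> 0 \<Longrightarrow> g k y \<ge> 0"
    and gs: "\<And>y. y \<ge> 0 \<Longrightarrow> (\<lambda>k. g k y) sums G y"
    and gm: "\<And>k. (\<lambda>x. g k (lam*x)) \<in> borel_measurable B"
    and Gi: "integrable B (\<lambda>x. G (lam*x))"
  shows "(\<lambda>k. \<integral>x. g k (lam*x) \<partial>B) sums (\<integral>x. G (lam*x) \<partial>B)"
proof -
  have AEy: "AE x in B. 0 \<le> lam*x" using Bnn by eventually_elim (use lam in simp)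
  have le: "g k y \<le> G y" if "y \<ge> 0" for k y
  proof -
    have "(\<Sum>i\<in>{k}. g i y) \<le> suminf (\<lambda>i. g i y)"
      by (rule sum_le_suminf) (use gs[OF that] gnn[OF that] in \<open>auto simp: sums_iff\<close>)
    then show ?thesis using gs[OF that] by (simp add: sums_iff)
  qed
  have Gnn: "G y \<ge> 0" if "y \<ge> 0" for y using le[OF that, of 0] gnn[OF that, of 0] by simp
  have int: "integrable B (\<lambda>x. g k (lam*x))" for k
  proof (rule Bochner_Integration.integrable_bound[OF Gi gm])
    show "AE x in B. norm (g k (lam*x)) \<le> norm (G (lam*x))"
      using AEy by eventually_elim (use le gnn Gnn in auto)
  qed
  have normeq: "(\<integral>x. norm (g k (lam*x)) \<partial>B) = (\<integral>x. g k (lam*x) \<partial>B)" for k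
    by (rule integral_cong_AE) (use gm AEy gnn in auto)
  have summ: "summable (\<lambda>k. \<integral>x. norm (g k (lam*x)) \<partial>B)"
  proof (rule summableI_nonneg_bounded)
    show "0 \<le> (\<integral>x. norm (g k (lam*x)) \<partial>B)" for k by (rule integral_nonneg_AE) simp
    fix n
    have "(\<Sum>k<n. \<integral>x. norm (g k (lam*x)) \<partial>B) = (\<integral>x. (\<Sum>k<n. g k (lam*x)) \<partial>B)"
      using normeq by (simp del: real_norm_def add: Bochner_Integration.integral_sum[OF int])
    also have "\<dots> \<le> (\<integral>x. G (lam*x) \<partial>B)"
    proof (rule integral_mono_AE)
      show "integrable B (\<lambda>x. \<Sum>k<n. g k (lam * x))" by (intro Bochner_Integration.integrable_sum int)
      show "AE x in B. (\<Sum>k<n. g k (lam * x)) \<le> G (lam * x)"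
        using AEy
      proof eventually_elim
        case (elim x)
        have "(\<Sum>k<n. g k (lam * x)) \<le> suminf (\<lambda>k. g k (lam*x))"
          by (rule sum_le_suminf) (use gs[OF elim] gnn[OF elim] in \<open>auto simp: sums_iff\<close>)
        then show ?case using gs[OF elim] by (simp add: sums_iff)
      qed
    qed (rule Gi)
    finally show "(\<Sum>k<n. \<integral>x. norm (g k (lam*x)) \<partial>B) \<le> (\<integral>x. G (lam*x) \<partial>B)" .
  qed
  have AEs: "AE x in B. summable (\<lambda>k. norm (g k (lam*x)))"
    using AEy by eventually_elim (use gs gnn in \<open>auto simp: sums_iff\<close>)
  note S = sums_integral[of B "\<lambda>k x. g k (lam*x)", OF int AEs summ]
  note I = integrable_suminf[of B "\<lambda>k x. g k (lam*x)", OF int AEs summ]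
  have "(\<integral>x. (\<Sum>k. g k (lam*x)) \<partial>B) = (\<integral>x. G (lam*x) \<partial>B)"
    by (rule integral_cong_AE)
       (use I Gi AEy gs in \<open>auto simp: sums_iff dest: borel_measurable_integrable\<close>)
  with S show ?thesis by simp
qed

locale svc =
  fixes lam :: real and B :: "real measure"
  assumes P: "prob_space B" and Bs: "sets B = sets borel" and Bnn: "AE x in B. 0 \<le> x"
    and lam: "lam > 0"
begin

lemma FM: "finite_measure B" using P by (simp add: prob_space_def)
lemma intc: "integrable B (\<lambda>x. c)" using finite_measure.integrable_const[OF FM] .

definition "ar k = arrivals_during lam B k"

lemma meas_iff: "f \<in> borel_measurable B \<longleftrightarrow> f \<in> borel_measurable borel" for f :: "real \<Rightarrow> real"
  using measurable_cong_sets[OF Bs refl, where N="borel :: real measure"] by simp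

lemma ar_eq: "ar k = (\<integral>x. pois (lam*x) k \<partial>B)"
  unfolding ar_def arrivals_during_def pois_def by simp

lemma pm0: "(\<lambda>x. pois (lam*x) k) \<in> borel_measurable B"
  unfolding meas_iff pois_def by measurable
lemma pm1: "(\<lambda>x. real k * pois (lam*x) k) \<in> borel_measurable B"
  unfolding meas_iff pois_def by measurable
lemma pm2: "(\<lambda>x. real k * (real k - 1) * pois (lam*x) k) \<in> borel_measurable B"
  unfolding meas_iff pois_def by measurable

lemma ar_nn: "ar k \<ge> 0"
  unfolding ar_eq by (rule integral_nonneg_AE) (use Bnn lam in \<open>auto elim!: eventually_mono intro: pois_nn\<close>)

lemma ar_sums: "ar sums 1"
proof -
  have "(\<lambda>k. \<integral>x. pois (lam*x) k \<partial>B) sums (\<integral>x. (\<lambda>y. 1) (lam*x) \<partial>B)"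
    by (rule sums_integral_nn[OF Bnn lam, where g="\<lambda>k y. pois y k"])
       (rule pois_nn, assumption, rule pois_sums, rule pm0, rule intc)
  then show ?thesis using prob_space.prob_space[OF P] by (simp add: ar_eq[abs_def])
qed

lemma ar_mean: assumes "integrable B (\<lambda>x. x)"
  shows "(\<lambda>k. real k * ar k) sums (lam * (\<integral>x. x \<partial>B))"
proof -
  have "(\<lambda>k. \<integral>x. real k * pois (lam*x) k \<partial>B) sums (\<integral>x. (\<lambda>y. y) (lam*x) \<partial>B)"
    by (rule sums_integral_nn[OF Bnn lam, where g="\<lambda>k y. real k * pois y k"])
       (simp add: pois_nn, rule pois1_sums, rule pm1, simp add: assms)
  then show ?thesis by (simp add: ar_eq[abs_def])
qed

lemma ar_m2: assumes "integrable B (\<lambda>x. x^2)"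
  shows "(\<lambda>k. real k * (real k - 1) * ar k) sums (lam^2 * (\<integral>x. x^2 \<partial>B))"
proof -
  have g: "0 \<le> real k * (real k - 1) * pois y k" if "y \<ge> 0" for k y
    using pois_nn[OF that, of k] by (cases k) auto
  have "(\<lambda>k. \<integral>x. real k * (real k - 1) * pois (lam*x) k \<partial>B) sums (\<integral>x. (\<lambda>y. y^2) (lam*x) \<partial>B)"
    by (rule sums_integral_nn[OF Bnn lam, where g="\<lambda>k y. real k * (real k - 1) * pois y k"])
       (rule g, assumption, rule pois2_sums, rule pm2, simp add: assms power_mult_distrib)
  then show ?thesis by (simp add: ar_eq[abs_def] power_mult_distrib)
qed

lemma ar0_pos: "ar 0 > 0"
proof -
  have int: "integrable B (\<lambda>x. pois (lam*x) 0)"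
  proof (rule Bochner_Integration.integrable_bound[OF intc[of 1] pm0])
    show "AE x in B. norm (pois (lam*x) 0) \<le> norm (1::real)"
      using Bnn by eventually_elim (use lam in \<open>simp add: pois_def\<close>)
  qed
  have nn: "AE x in B. 0 \<le> pois (lam*x) 0" by (simp add: pois_def)
  have "ar 0 \<noteq> 0"
  proof
    assume "ar 0 = 0"
    then have "AE x in B. pois (lam*x) 0 = 0"
      using integral_nonneg_eq_0_iff_AE[OF int nn] by (simp add: ar_eq)
    then have "AE x in B. False" by (simp add: pois_def)
    then show False using prob_space.AE_False[OF P] by simp
  qed
  then show ?thesis using ar_nn[of 0] by simp
qed

end


lemma partial_le_sums:
  fixes g :: "nat \<Rightarrow> real"
  assumes "\<And>k. g k \<ge> 0" "g sums s" and that: "finite A"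
  shows "(\<Sum>k\<in>A. g k) \<le> s"
proof -
  have "(\<Sum>k\<in>A. g k) \<le> suminf g"
    by (rule sum_le_suminf) (use assms that in \<open>auto simp: sums_iff\<close>)
  then show ?thesis using assms by (simp add: sums_iff)
qed

lemma cesaro0:
  fixes e :: "nat \<Rightarrow> real"
  assumes e: "e \<longlonglongrightarrow> 0"
  shows "(\<lambda>L. (\<Sum>i\<le>L. e i) / real L) \<longlonglongrightarrow> 0"
proof (rule tendstoI)
  fix r :: real assume r: "r > 0"
  from e r obtain N where N: "\<And>i. i \<ge> N \<Longrightarrow> \<bar>e i\<bar> < r/2"
    unfolding LIMSEQ_iff by (metis half_gt_zero real_norm_def diff_zero)
  define C where "C = (\<Sum>i<N. \<bar>e i\<bar>)"
  have C0: "C \<ge> 0" unfolding C_def by (simp add: sum_nonneg)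
  have bnd: "\<bar>\<Sum>i\<le>L. e i\<bar> \<le> C + (real L + 1) * (r/2)" for L
  proof -
    have tw: "\<bar>e i\<bar> \<le> \<bar>e i\<bar> * (if i < N then 1 else 0) + r/2" for i
      using N[of i] r by (cases "i < N") auto
    have "\<bar>\<Sum>i\<le>L. e i\<bar> \<le> (\<Sum>i\<le>L. \<bar>e i\<bar>)" by (rule sum_abs)
    also have "\<dots> \<le> (\<Sum>i\<le>L. \<bar>e i\<bar> * (if i < N then 1 else 0) + r/2)"
      by (intro sum_mono tw)
    also have "\<dots> = (\<Sum>i\<le>L. \<bar>e i\<bar> * (if i < N then 1 else 0)) + (\<Sum>i\<le>L. r/2)"
      by (rule sum.distrib)
    also have "(\<Sum>i\<le>L. \<bar>e i\<bar> * (if i < N then 1 else 0)) = (\<Sum>i\<in>{..L} \<inter> {..<N}. \<bar>e i\<bar>)"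
      by (subst sum.inter_restrict) (auto intro!: sum.cong)
    also have "(\<Sum>i\<le>L. r/2) = (real L + 1) * (r/2)" by simp
    also have "(\<Sum>i\<in>{..L} \<inter> {..<N}. \<bar>e i\<bar>) \<le> C"
      unfolding C_def by (rule sum_mono2) auto
    finally show ?thesis by simp
  qed
  have "(\<lambda>L. (C + r/2) / real L) \<longlonglongrightarrow> 0" by (rule lim_const_over_n)
  then have ev: "eventually (\<lambda>L. (C + r/2) / real L < r/2) sequentially"
    using r by (intro order_tendstoD) auto
  have ev1: "eventually (\<lambda>L. L \<ge> 1) sequentially" by (rule eventually_ge_at_top)
  show "eventually (\<lambda>L. dist ((\<Sum>i\<le>L. e i) / real L) 0 < r) sequentially"
    using ev ev1
  proof eventually_elim
    case (elim L)
    have Lp: "real L > 0" using elim(2) by simp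
    have "\<bar>(\<Sum>i\<le>L. e i) / real L\<bar> = \<bar>\<Sum>i\<le>L. e i\<bar> / real L" using Lp by simp
    also have "\<dots> \<le> (C + (real L + 1) * (r/2)) / real L"
      using bnd[of L] Lp by (simp add: divide_right_mono)
    also have "\<dots> = (C + r/2) / real L + r/2" using Lp by (simp add: field_simps)
    also have "\<dots> < r/2 + r/2" using add_strict_right_mono[OF elim(1), of "r/2"] by simp
    also have "r/2 + r/2 = r" by simp
    finally show ?case by (simp add: dist_real_def)
  qed
qed

lemma cesaro:
  fixes u :: "nat \<Rightarrow> real"
  assumes u: "u \<longlonglongrightarrow> c"
  shows "(\<lambda>L. (\<Sum>i\<le>L. u i) / real L) \<longlonglongrightarrow> c"
proof -
  have e: "(\<lambda>i. u i - c) \<longlonglongrightarrow> 0" using tendsto_diff[OF u tendsto_const[of c]] by simp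
  have eq: "(\<Sum>i\<le>L. u i) / real L = (\<Sum>i\<le>L. u i - c) / real L + c * (real (Suc L) / real L)" for L
    by (simp add: sum_subtractf add_divide_distrib[symmetric] algebra_simps)
  have "(\<lambda>L. (\<Sum>i\<le>L. u i - c) / real L + c * (real (Suc L) / real L)) \<longlonglongrightarrow> 0 + c * 1"
    by (intro tendsto_intros cesaro0[OF e] LIMSEQ_Suc_n_over_n)
  then show ?thesis unfolding eq by simp
qed


lemma GS:
  fixes g :: "nat \<Rightarrow> real"
  assumes "d \<le> L" "L \<le> N"
  shows "(\<Sum>n=L..N. g (n - d)) = (\<Sum>k\<le>N-d. g k) - (\<Sum>k<L-d. g k)"
  using assms(2)
proof (induction N rule: dec_induct)
  case base
  have "L - d = Suc (L - d) - 1" by simp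
  have "{..L-d} = insert (L-d) {..<L-d}" by auto
  then show ?case by simp
next
  case (step n)
  have "Suc n - d = Suc (n - d)" using assms(1) step(1) by simp
  then show ?case using step by simp
qed

lemma TRI:
  fixes h :: "nat \<Rightarrow> nat \<Rightarrow> real"
  shows "(\<Sum>n=L..N. \<Sum>i=Suc L..n. h i n) = (\<Sum>i=Suc L..N. \<Sum>n=i..N. h i n)"
proof -
  have "(\<Sum>n=L..N. \<Sum>i=Suc L..n. h i n) = (\<Sum>n=L..N. \<Sum>i=Suc L..N. if i \<le> n then h i n else 0)"
  proof (rule sum.cong[OF refl])
    fix n assume "n \<in> {L..N}"
    then have "{i \<in> {Suc L..N}. i \<le> n} = {Suc L..n}" by auto
    then show "(\<Sum>i=Suc L..n. h i n) = (\<Sum>i=Suc L..N. if i \<le> n then h i n else 0)"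
      using sum.inter_filter[of "{Suc L..N}" "\<lambda>i. h i n" "\<lambda>i. i \<le> n"] by simp
  qed
  also have "\<dots> = (\<Sum>i=Suc L..N. \<Sum>n=L..N. if i \<le> n then h i n else 0)"
    by (rule sum.swap)
  also have "\<dots> = (\<Sum>i=Suc L..N. \<Sum>n=i..N. h i n)"
  proof (rule sum.cong[OF refl])
    fix i assume "i \<in> {Suc L..N}"
    then have "{n \<in> {L..N}. i \<le> n} = {i..N}" by auto
    then show "(\<Sum>n=L..N. if i \<le> n then h i n else 0) = (\<Sum>n=i..N. h i n)"
      using sum.inter_filter[of "{L..N}" "\<lambda>n. h i n" "\<lambda>n. i \<le> n"] by simp
  qed
  finally show ?thesis .
qed

lemma split_sum:
  fixes g :: "nat \<Rightarrow> real"
  assumes "L \<le> M"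
  shows "(\<Sum>i\<le>M. g i) = (\<Sum>i\<le>L. g i) + (\<Sum>i=Suc L..M. g i)"
proof -
  have "{..M} = {..L} \<union> {Suc L..M}" using assms by auto
  moreover have "{..L} \<inter> {Suc L..M} = {}" by auto
  ultimately show ?thesis by (simp add: sum.union_disjoint)
qed



locale qsys =
  fixes lam :: real and B1 B2 :: "real measure"
  assumes lam_pos: "lam > 0"
    and B1_prob: "prob_space B1" and B1_borel: "sets B1 = sets borel"
    and B1_nonneg: "AE x in B1. 0 \<le> x"
    and B2_prob: "prob_space B2" and B2_borel: "sets B2 = sets borel"
    and B2_nonneg: "AE x in B2. 0 \<le> x"
    and rho1: "integrable B1 (\<lambda>x. x)" "lam * (\<integral>x. x \<partial>B1) = 1"
    and rho12: "integrable B1 (\<lambda>x. x ^ 2)"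
    and rho2: "integrable B2 (\<lambda>x. x)" "lam * (\<integral>x. x \<partial>B2) < 1"
begin

sublocale S1: svc lam B1 by (simp add: svc_def B1_prob B1_borel B1_nonneg lam_pos)
sublocale S2: svc lam B2 by (simp add: svc_def B2_prob B2_borel B2_nonneg lam_pos)

abbreviation "a \<equiv> S1.ar"
abbreviation "c \<equiv> S2.ar"
definition "r2 = lam * (\<integral>x. x \<partial>B2)"
definition "Abar m = 1 - (\<Sum>k\<le>m. a k)"
definition "Cbar m = 1 - (\<Sum>k\<le>m. c k)"
definition "V m = 1 - (\<Sum>k\<le>m. Abar k)"
definition "ff m = (if m = 0 then 0 else Abar m / a 0)"
definition "bb k = a k / a 0"

lemma a0: "a 0 > 0" by (rule S1.ar0_pos)
lemma r2: "r2 < 1" using rho2 by (simp add: r2_def)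

lemma Abar_nn: "Abar m \<ge> 0"
  using partial_le_sums[OF S1.ar_nn S1.ar_sums, of "{..m}"] by (simp add: Abar_def)
lemma Cbar_nn: "Cbar m \<ge> 0"
  using partial_le_sums[OF S2.ar_nn S2.ar_sums, of "{..m}"] by (simp add: Cbar_def)
lemma Abar0: "Abar 0 = 1 - a 0" by (simp add: Abar_def)
lemma Cbar0: "Cbar 0 = 1 - c 0" by (simp add: Cbar_def)
lemma Abar_Suc: "Abar (Suc m) = Abar m - a (Suc m)" by (simp add: Abar_def)

lemma Abar_sums: "Abar sums 1"
proof -
  have "(\<lambda>m. 1 * (1 - (\<Sum>k\<le>m. a k))) sums (\<Sum>k. (\<Sum>m<k. (1::real)) * a k)"
    by (rule tail_sums[OF S1.ar_nn _ S1.ar_sums])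
       (use S1.ar_mean[OF rho1(1)] in \<open>auto simp: sums_iff\<close>)
  moreover have "(\<Sum>k. (\<Sum>m<k. (1::real)) * a k) = 1"
    using S1.ar_mean[OF rho1(1)] rho1(2) by (simp add: sums_iff)
  ultimately show ?thesis by (simp add: Abar_def[abs_def])
qed

lemma Cbar_sums: "Cbar sums r2"
proof -
  have "(\<lambda>m. 1 * (1 - (\<Sum>k\<le>m. c k))) sums (\<Sum>k. (\<Sum>m<k. (1::real)) * c k)"
    by (rule tail_sums[OF S2.ar_nn _ S2.ar_sums])
       (use S2.ar_mean[OF rho2(1)] in \<open>auto simp: sums_iff\<close>)
  moreover have "(\<Sum>k. (\<Sum>m<k. (1::real)) * c k) = r2"
    using S2.ar_mean[OF rho2(1)] by (simp add: sums_iff r2_def)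
  ultimately show ?thesis by (simp add: Cbar_def[abs_def])
qed

lemma mAbar_summable: "summable (\<lambda>m. real m * Abar m)"
proof -
  have W: "(\<Sum>m<k. real m) \<le> real k * (real k - 1)" for k
  proof -
    have "(\<Sum>m<k. real m) \<le> (\<Sum>m<k. real k - 1)"
      by (intro sum_mono) auto
    then show ?thesis by simp
  qed
  have s2: "summable (\<lambda>k. real k * (real k - 1) * a k)"
    using S1.ar_m2[OF rho12] by (simp add: sums_iff)
  have "summable (\<lambda>k. (\<Sum>m<k. real m) * a k)"
  proof (rule summable_comparison_test'[OF s2])
    fix k :: nat
    show "norm ((\<Sum>m<k. real m) * a k) \<le> real k * (real k - 1) * a k"
      using W[of k] S1.ar_nn[of k] by (simp add: abs_mult sum_nonneg mult_right_mono)
  qed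
  from tail_sums[OF S1.ar_nn _ S1.ar_sums this]
  show ?thesis by (auto simp: Abar_def[abs_def] sums_iff)
qed

lemma V_summable: "summable V"
proof -
  have "(\<lambda>m. 1 * (1 - (\<Sum>k\<le>m. Abar k))) sums (\<Sum>k. (\<Sum>m<k. (1::real)) * Abar k)"
    by (rule tail_sums[OF Abar_nn _ Abar_sums]) (use mAbar_summable in auto)
  then show ?thesis by (auto simp: V_def[abs_def] sums_iff)
qed

lemma V_nn: "V m \<ge> 0"
  using partial_le_sums[OF Abar_nn Abar_sums, of "{..m}"] by (simp add: V_def)

lemma Abar1: "Abar 1 > 0"
proof (rule ccontr)
  assume "\<not> Abar 1 > 0"
  then have A1: "Abar 1 = 0" using Abar_nn[of 1] by simp
  have "Abar (Suc m) \<le> Abar 1" for m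
  proof (induction m)
    case 0 then show ?case by simp
  next
    case (Suc m) then show ?case using Abar_Suc[of "Suc m"] S1.ar_nn[of "Suc (Suc m)"] by simp
  qed
  then have z: "Abar (Suc m) = 0" for m using A1 Abar_nn[of "Suc m"] by (simp add: antisym)
  have "(\<lambda>m. Abar (Suc m)) sums (1 - Abar 0)"
    using sums_Suc_iff[of Abar "1 - Abar 0"] Abar_sums by simp
  then have "1 - Abar 0 = 0" using z by (simp add: sums_iff)
  then show False using a0 by (simp add: Abar0)
qed

lemma ff_partial: "(\<Sum>k\<le>m. ff k) = ((\<Sum>k\<le>m. Abar k) - Abar 0) / a 0"
  using a0 by (induction m) (simp_all add: ff_def field_simps)

lemma ff_sums: "ff sums 1"
proof -
  have "(\<lambda>m. Abar (Suc m)) sums (1 - Abar 0)"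
    using sums_Suc_iff[of Abar "1 - Abar 0"] Abar_sums by simp
  then have "(\<lambda>m. Abar (Suc m) / a 0) sums ((1 - Abar 0) / a 0)" by (rule sums_divide)
  then have "(\<lambda>m. ff (Suc m)) sums 1" using a0 by (simp add: ff_def Abar0)
  then show ?thesis using sums_Suc_iff[of ff 1] by (simp add: ff_def)
qed

sublocale RN: renew ff bb
proof unfold_locales
  show "ff 0 = 0" by (simp add: ff_def)
  show "0 \<le> ff m" for m using Abar_nn[of m] a0 by (simp add: ff_def)
  show "ff sums 1" by (rule ff_sums)
  show "0 < ff 1" using Abar1 a0 by (simp add: ff_def)
  show "0 \<le> bb n" for n using S1.ar_nn[of n] a0 by (simp add: bb_def)
  show "summable bb" unfolding bb_def[abs_def]
    by (intro summable_divide) (use S1.ar_sums in \<open>simp add: sums_iff\<close>)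
  have "(\<lambda>m. 1 - (\<Sum>k\<le>m. ff k)) = (\<lambda>m. V m / a 0)"
    using a0 by (auto simp: ff_partial V_def Abar0 field_simps)
  then show "summable (\<lambda>m. 1 - (\<Sum>k\<le>m. ff k))"
    using summable_divide[OF V_summable] by simp
qed

lemma bb_sum: "suminf bb = 1 / a 0"
  using sums_divide[OF S1.ar_sums, of "a 0"] by (simp add: bb_def[abs_def] sums_iff)

definition "c0 = suminf bb / suminf RN.R"
lemma c0_pos: "c0 > 0" using RN.mu_pos bb_sum a0 by (simp add: c0_def)
lemma u_lim: "RN.u \<longlonglongrightarrow> c0" unfolding c0_def by (rule RN.renewal)


context
  fixes L :: nat and Q :: "nat \<Rightarrow> real"
  assumes L1: "L \<ge> 1" and st: "stationary_dist (thr_trans lam B1 B2 L) Q"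
begin

abbreviation "P \<equiv> thr_trans lam B1 B2 L"

lemma P_eq: "P i j = (if i = 0 then a j else if j+1 < i then 0 else if i \<le> L then a (j+1-i) else c (j+1-i))"
  by (simp add: thr_trans_def S1.ar_def S2.ar_def)

lemma Q_nn: "Q i \<ge> 0" using st by (simp add: stationary_dist_def)
lemma Q_sums: "Q sums 1" using st by (simp add: stationary_dist_def)

lemma bal: "Q j = (\<Sum>i\<le>Suc j. Q i * P i j)"
proof -
  have s: "(\<lambda>i. Q i * P i j) sums Q j" using st by (simp add: stationary_dist_def)
  have "(\<lambda>i. Q i * P i j) sums (\<Sum>i\<in>{..Suc j}. Q i * P i j)"
    by (rule sums_finite) (auto simp: P_eq)
  then show ?thesis using s sums_unique2 by blast
qed

lemma PS: "(\<Sum>j\<le>n. P i j) = (if i = 0 then (\<Sum>k\<le>n. a k) else if n+1 < i then 0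
    else if i \<le> L then (\<Sum>k\<le>n+1-i. a k) else (\<Sum>k\<le>n+1-i. c k))"
proof (induction n)
  case 0
  then show ?case by (auto simp: P_eq)
next
  case (Suc n)
  show ?case
  proof (cases "i = 0")
    case True then show ?thesis using Suc by (simp add: P_eq)
  next
    case False
    show ?thesis
    proof (cases "n + 2 < i")
      case True then show ?thesis using Suc False by (simp add: P_eq)
    next
      case F2: False
      show ?thesis
      proof (cases "n + 2 = i")
        case True then show ?thesis using Suc False by (simp add: P_eq)
      next
        case F3: False
        then have e: "Suc (Suc n) - i = Suc (Suc n - i)" using F2 by simp
        show ?thesis using Suc False F2 F3 by (simp add: P_eq e)
      qed
    qed
  qed
qed

lemma cut: "Q (Suc n) * P (Suc n) n = (\<Sum>i\<le>n. Q i * (1 - (\<Sum>j\<le>n. P i j)))"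
proof -
  have "(\<Sum>j\<le>n. Q j) = (\<Sum>j\<le>n. \<Sum>i\<le>Suc n. Q i * P i j)"
  proof (rule sum.cong[OF refl])
    fix j assume "j \<in> {..n}"
    then have "(\<Sum>i\<le>Suc n. Q i * P i j) = (\<Sum>i\<le>Suc j. Q i * P i j)"
      by (intro sum.mono_neutral_right) (auto simp: P_eq)
    then show "Q j = (\<Sum>i\<le>Suc n. Q i * P i j)" using bal[of j] by simp
  qed
  also have "\<dots> = (\<Sum>i\<le>Suc n. Q i * (\<Sum>j\<le>n. P i j))"
    by (subst sum.swap) (simp add: sum_distrib_left)
  also have "\<dots> = (\<Sum>i\<le>n. Q i * (\<Sum>j\<le>n. P i j)) + Q (Suc n) * P (Suc n) n"
  proof -
    have "(\<Sum>j\<le>n. P (Suc n) j) = P (Suc n) n" by (subst PS) (simp add: P_eq)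
    then show ?thesis by simp
  qed
  finally show ?thesis by (simp add: algebra_simps sum_subtractf)
qed

lemma one_minus_PS: "i \<le> n \<Longrightarrow> 1 - (\<Sum>j\<le>n. P i j) =
   (if i = 0 then Abar n else if i \<le> L then Abar (Suc n - i) else Cbar (Suc n - i))"
  by (simp add: PS Abar_def Cbar_def)

lemma u0: "RN.u 0 = 1" using RN.u_eq[of 0] a0 by (simp add: bb_def)

lemma Q_u: "N \<le> L \<Longrightarrow> Q N = Q 0 * RN.u N"
proof (induction N rule: less_induct)
  case (less N)
  show ?case
  proof (cases N)
    case 0 then show ?thesis by (simp add: u0)
  next
    case (Suc n)
    define h where "h i = (if i = 0 then Abar n else Abar (N - i))" for i
    have "Q N * a 0 = (\<Sum>i\<le>n. Q i * (1 - (\<Sum>j\<le>n. P i j)))"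
      using cut[of n] less.prems Suc by (simp add: P_eq)
    also have "\<dots> = (\<Sum>i\<le>n. Q 0 * (RN.u i * h i))"
    proof (rule sum.cong[OF refl])
      fix i assume i: "i \<in> {..n}"
      then have "i < N" "i \<le> L" using Suc less.prems by auto
      then show "Q i * (1 - (\<Sum>j\<le>n. P i j)) = Q 0 * (RN.u i * h i)"
        using less.IH[of i] i one_minus_PS[of i n] Suc by (simp add: h_def)
    qed
    also have "\<dots> = Q 0 * (\<Sum>i\<le>n. RN.u i * h i)" by (simp add: sum_distrib_left)
    also have "(\<Sum>i\<le>n. RN.u i * h i) = RN.u N * a 0"
    proof -
      have "(\<Sum>i<N. ff (N-i) * RN.u i) = (\<Sum>i<N. Abar (N-i) * RN.u i / a 0)"
        by (rule sum.cong[OF refl]) (auto simp: ff_def)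
      also have "\<dots> = (\<Sum>i<N. Abar (N-i) * RN.u i) / a 0" by (simp add: sum_divide_distrib)
      finally have "RN.u N = a N / a 0 + (\<Sum>i<N. Abar (N-i) * RN.u i) / a 0"
        using RN.u_eq[of N] by (simp add: bb_def)
      then have E1: "RN.u N * a 0 = a N + (\<Sum>i<N. Abar (N - i) * RN.u i)"
        using a0 by (simp add: field_simps)
      have E2: "(\<Sum>i<N. Abar (N - i) * RN.u i) = Abar N + (\<Sum>i<n. Abar (N - Suc i) * RN.u (Suc i))"
        unfolding Suc lessThan_Suc_atMost by (subst sum.atMost_shift) (simp add: u0)
      have E3: "(\<Sum>i\<le>n. RN.u i * h i) = Abar n + (\<Sum>i<n. Abar (N - Suc i) * RN.u (Suc i))"
        by (subst sum.atMost_shift) (simp add: u0 h_def mult.commute)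
      have E4: "Abar n = a N + Abar N" using Abar_Suc[of n] Suc by simp
      show ?thesis unfolding E1 E2 E3 E4 by simp
    qed
    finally have "Q N * a 0 = Q 0 * RN.u N * a 0" by simp
    then show ?thesis using a0 by simp
  qed
qed


lemma cutL:
  assumes "L \<le> n"
  shows "Q (Suc n) * c 0 = Q 0 * Abar n + (\<Sum>i=1..L. Q i * Abar (Suc n - i))
           + (\<Sum>i=Suc L..n. Q i * Cbar (Suc n - i))"
proof -
  define g where "g i = Q i * (1 - (\<Sum>j\<le>n. P i j))" for i
  have "Q (Suc n) * c 0 = (\<Sum>i\<le>n. g i)" using cut[of n] assms by (simp add: P_eq g_def)
  also have "\<dots> = (\<Sum>i\<le>L. g i) + (\<Sum>i=Suc L..n. g i)" by (rule split_sum[OF assms])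
  also have "{..L} = insert 0 {1..L}" by auto
  also have "(\<Sum>i\<in>insert 0 {1..L}. g i) = g 0 + (\<Sum>i=1..L. g i)" by (simp add: sum.insert)
  also have "g 0 = Q 0 * Abar n" by (simp add: g_def one_minus_PS)
  also have "(\<Sum>i=1..L. g i) = (\<Sum>i=1..L. Q i * Abar (Suc n - i))"
    by (rule sum.cong[OF refl]) (use assms in \<open>simp add: g_def one_minus_PS\<close>)
  also have "(\<Sum>i=Suc L..n. g i) = (\<Sum>i=Suc L..n. Q i * Cbar (Suc n - i))"
    by (rule sum.cong[OF refl]) (simp add: g_def one_minus_PS)
  finally show ?thesis .
qed

lemma Q_le: "i \<le> L \<Longrightarrow> Q i \<le> Q 0 * suminf bb"
  using Q_u[of i] RN.u_le[of i] Q_nn[of 0] by (simp add: mult_left_mono)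

lemma tail_bound:
  assumes LN: "L \<le> N"
  shows "(1 - r2) * (\<Sum>i=Suc L..N. Q i) \<le> Q 0 * (1 + suminf bb * suminf V)"
proof -
  define T where "T = (\<Sum>i=Suc L..N. Q i)"
  have T0: "T \<ge> 0" unfolding T_def by (intro sum_nonneg Q_nn)
  have "(\<Sum>n=L..N. Q (Suc n) * c 0) = (\<Sum>n=L..N. Q 0 * Abar n + (\<Sum>i=1..L. Q i * Abar (Suc n - i))
           + (\<Sum>i=Suc L..n. Q i * Cbar (Suc n - i)))"
    by (rule sum.cong[OF refl]) (simp add: cutL)
  also have "\<dots> = Q 0 * (\<Sum>n=L..N. Abar n) + (\<Sum>i=1..L. Q i * (\<Sum>n=L..N. Abar (Suc n - i)))
           + (\<Sum>i=Suc L..N. Q i * (\<Sum>n=i..N. Cbar (Suc n - i)))"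
  proof -
    have "(\<Sum>n=L..N. \<Sum>i=1..L. Q i * Abar (Suc n - i)) = (\<Sum>i=1..L. \<Sum>n=L..N. Q i * Abar (Suc n - i))"
      by (rule sum.swap)
    also have "\<dots> = (\<Sum>i=1..L. Q i * (\<Sum>n=L..N. Abar (Suc n - i)))" by (simp add: sum_distrib_left)
    finally have 1: "(\<Sum>n=L..N. \<Sum>i=1..L. Q i * Abar (Suc n - i)) = (\<Sum>i=1..L. Q i * (\<Sum>n=L..N. Abar (Suc n - i)))" .
    have 2: "(\<Sum>n=L..N. \<Sum>i=Suc L..n. Q i * Cbar (Suc n - i)) = (\<Sum>i=Suc L..N. Q i * (\<Sum>n=i..N. Cbar (Suc n - i)))"
      by (simp add: TRI sum_distrib_left)
    show ?thesis by (simp only: sum.distrib 1 2 sum_distrib_left)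
  qed
  finally have eq: "(\<Sum>n=L..N. Q (Suc n) * c 0) = Q 0 * (\<Sum>n=L..N. Abar n)
      + (\<Sum>i=1..L. Q i * (\<Sum>n=L..N. Abar (Suc n - i)))
      + (\<Sum>i=Suc L..N. Q i * (\<Sum>n=i..N. Cbar (Suc n - i)))" .
  have X1: "(\<Sum>n=L..N. Abar n) \<le> 1"
    by (rule partial_le_sums[OF Abar_nn Abar_sums]) simp
  have X2: "(\<Sum>n=L..N. Abar (Suc n - i)) \<le> V (L - i)" if i: "i \<in> {1..L}" for i
  proof -
    have "(\<Sum>n=L..N. Abar (Suc n - i)) = (\<Sum>n=L..N. Abar (n - (i - 1)))"
      by (rule sum.cong[OF refl]) (use i in auto)
    also have "\<dots> = (\<Sum>k\<le>N-(i-1). Abar k) - (\<Sum>k<L-(i-1). Abar k)"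
      by (rule GS) (use i LN in auto)
    also have "{..<L-(i-1)} = {..L-i}" using i by auto
    also have "(\<Sum>k\<le>N-(i-1). Abar k) \<le> 1"
      by (rule partial_le_sums[OF Abar_nn Abar_sums]) simp
    finally show ?thesis by (simp add: V_def)
  qed
  have X3: "(\<Sum>i=1..L. Q i * (\<Sum>n=L..N. Abar (Suc n - i))) \<le> Q 0 * suminf bb * suminf V"
  proof -
    have "(\<Sum>i=1..L. Q i * (\<Sum>n=L..N. Abar (Suc n - i))) \<le> (\<Sum>i=1..L. Q 0 * suminf bb * V (L - i))"
    proof (rule sum_mono)
      fix i assume i: "i \<in> {1..L}"
      have "Q i * (\<Sum>n=L..N. Abar (Suc n - i)) \<le> Q i * V (L - i)"
        by (rule mult_left_mono[OF X2[OF i] Q_nn])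
      also have "\<dots> \<le> Q 0 * suminf bb * V (L - i)"
        by (rule mult_right_mono[OF Q_le V_nn]) (use i in auto)
      finally show "Q i * (\<Sum>n=L..N. Abar (Suc n - i)) \<le> Q 0 * suminf bb * V (L - i)" .
    qed
    also have "\<dots> = Q 0 * suminf bb * (\<Sum>i=1..L. V (L - i))" by (simp add: sum_distrib_left)
    also have "(\<Sum>i=1..L. V (L - i)) = (\<Sum>k<L. V k)"
      by (rule sum.reindex_bij_witness[where i="\<lambda>k. L - k" and j="\<lambda>i. L - i"]) auto
    also have "(\<Sum>k<L. V k) \<le> suminf V"
      by (rule sum_le_suminf) (auto simp: V_summable V_nn)
    finally show ?thesis
      using Q_nn[of 0] RN.bsum RN.bnn
      by (simp add: mult_left_mono suminf_nonneg)
  qed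
  have Y: "(\<Sum>i=Suc L..N. Q i * (\<Sum>n=i..N. Cbar (Suc n - i))) \<le> (r2 - Cbar 0) * T"
  proof -
    have "(\<Sum>i=Suc L..N. Q i * (\<Sum>n=i..N. Cbar (Suc n - i))) \<le> (\<Sum>i=Suc L..N. Q i * (r2 - Cbar 0))"
    proof (rule sum_mono)
      fix i assume i: "i \<in> {Suc L..N}"
      have "(\<Sum>n=i..N. Cbar (Suc n - i)) = (\<Sum>n=i..N. Cbar (n - (i - 1)))"
        by (rule sum.cong[OF refl]) (use i in auto)
      also have "\<dots> = (\<Sum>k\<le>N-(i-1). Cbar k) - (\<Sum>k<i-(i-1). Cbar k)"
        by (rule GS) (use i in auto)
      also have "i - (i - 1) = 1" using i by auto
      also have "(\<Sum>k\<le>N-(i-1). Cbar k) \<le> r2"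
        by (rule partial_le_sums[OF Cbar_nn Cbar_sums]) simp
      finally have "(\<Sum>n=i..N. Cbar (Suc n - i)) \<le> r2 - Cbar 0" by simp
      then show "Q i * (\<Sum>n=i..N. Cbar (Suc n - i)) \<le> Q i * (r2 - Cbar 0)"
        by (rule mult_left_mono[OF _ Q_nn])
    qed
    also have "\<dots> = (r2 - Cbar 0) * T" by (simp add: T_def sum_distrib_right mult.commute)
    finally show ?thesis .
  qed
  have LHS: "c 0 * T \<le> (\<Sum>n=L..N. Q (Suc n) * c 0)"
  proof -
    have sh: "(\<Sum>i=Suc L..Suc N. Q i) = (\<Sum>n=L..N. Q (Suc n))"
      by (rule sum.shift_bounds_cl_Suc_ivl)
    have "(\<Sum>n=L..N. Q (Suc n) * c 0) = c 0 * (\<Sum>i=Suc L..Suc N. Q i)"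
      unfolding sh by (simp add: sum_distrib_left mult.commute[of "c 0"])
    moreover have "T \<le> (\<Sum>i=Suc L..Suc N. Q i)"
      unfolding T_def by (rule sum_mono2) (auto simp: Q_nn)
    ultimately show ?thesis using S2.ar_nn[of 0] by (simp add: mult_left_mono)
  qed
  have X1': "Q 0 * (\<Sum>n=L..N. Abar n) \<le> Q 0" using mult_left_mono[OF X1 Q_nn[of 0]] by simp
  have e: "(r2 - Cbar 0) * T = r2 * T - T + c 0 * T" by (simp add: Cbar0 algebra_simps)
  have "(1 - r2) * T \<le> Q 0 + Q 0 * suminf bb * suminf V"
    using eq X1' X3 Y LHS e by (simp add: algebra_simps)
  then show ?thesis by (simp add: T_def algebra_simps)
qed

definition "Kc = (1 + suminf bb * suminf V) / (1 - r2)"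

lemma Kc_nn: "Kc \<ge> 0"
  unfolding Kc_def using r2 RN.bsum RN.bnn V_summable V_nn
  by (intro divide_nonneg_nonneg add_nonneg_nonneg mult_nonneg_nonneg suminf_nonneg) auto

lemma F1: "Q 0 * (\<Sum>i\<le>L. RN.u i) \<le> 1"
proof -
  have "(\<Sum>i\<le>L. Q i) \<le> 1" by (rule partial_le_sums[OF Q_nn Q_sums]) simp
  moreover have "(\<Sum>i\<le>L. Q i) = Q 0 * (\<Sum>i\<le>L. RN.u i)"
    by (subst sum_distrib_left) (rule sum.cong[OF refl], rule Q_u, simp)
  ultimately show ?thesis by simp
qed

lemma F2: "1 \<le> Q 0 * ((\<Sum>i\<le>L. RN.u i) + Kc)"
proof -
  have lim: "(\<lambda>n. \<Sum>i<n. Q i) \<longlonglongrightarrow> 1" using Q_sums by (simp add: sums_def)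
  have "\<forall>n\<ge>Suc L. (\<Sum>i<n. Q i) \<le> Q 0 * ((\<Sum>i\<le>L. RN.u i) + Kc)"
  proof (intro allI impI)
    fix n assume n: "Suc L \<le> n"
    then have nn: "{..<n} = {..n-1}" by auto
    have "(\<Sum>i<n. Q i) = (\<Sum>i\<le>L. Q i) + (\<Sum>i=Suc L..n-1. Q i)"
      unfolding nn by (rule split_sum) (use n in auto)
    also have "(\<Sum>i\<le>L. Q i) = Q 0 * (\<Sum>i\<le>L. RN.u i)"
      by (subst sum_distrib_left) (rule sum.cong[OF refl], rule Q_u, simp)
    also have "(\<Sum>i=Suc L..n-1. Q i) \<le> Q 0 * Kc"
    proof -
      have r: "1 - r2 > 0" using r2 by simp
      have "(1 - r2) * (\<Sum>i=Suc L..n-1. Q i) \<le> Q 0 * (1 + suminf bb * suminf V)"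
        by (rule tail_bound) (use n in auto)
      then show ?thesis using r by (simp add: Kc_def field_simps)
    qed
    finally show "(\<Sum>i<n. Q i) \<le> Q 0 * ((\<Sum>i\<le>L. RN.u i) + Kc)" by (simp add: algebra_simps)
  qed
  then show ?thesis by (intro LIMSEQ_le_const2[OF lim]) blast
qed

end

end

theorem lemma3:
  fixes lam :: real and B1 B2 :: "real measure" and q :: "nat \<Rightarrow> nat \<Rightarrow> real" and j :: nat
  assumes lam_pos: "lam > 0"
    and B1_prob: "prob_space B1" and B1_borel: "sets B1 = sets borel"
    and B1_nonneg: "AE x in B1. 0 \<le> x"
    and B2_prob: "prob_space B2" and B2_borel: "sets B2 = sets borel"
    and B2_nonneg: "AE x in B2. 0 \<le> x"
    and rho1: "integrable B1 (\<lambda>x. x)" "lam * (\<integral>x. x \<partial>B1) = 1"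
    and rho12: "integrable B1 (\<lambda>x. x ^ 2)"
    and rho2: "integrable B2 (\<lambda>x. x)" "lam * (\<integral>x. x \<partial>B2) < 1"
    and stat: "\<And>L. L \<ge> 1 \<Longrightarrow> stationary_dist (thr_trans lam B1 B2 L) (q L)"
  shows "(\<lambda>L. real L * q L (L - j)) \<longlonglongrightarrow> 1"
proof -
  interpret QS: qsys lam B1 B2
    by (simp add: qsys_def assms)
  define u where "u = QS.RN.u"
  define PU where "PU L = (\<Sum>i\<le>L. u i)" for L
  define K where "K = QS.Kc"
  have ulim: "u \<longlonglongrightarrow> QS.c0" unfolding u_def by (rule QS.u_lim)
  have c0: "QS.c0 > 0" by (rule QS.c0_pos)
  have u0: "u 0 = 1" unfolding u_def by (rule QS.u0[OF order.refl stat[OF order.refl]])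
  have PU1: "PU L \<ge> 1" for L
  proof -
    have "u 0 \<le> PU L" unfolding PU_def u_def
      by (rule member_le_sum) (auto intro: QS.RN.u_nn)
    then show ?thesis using u0 by simp
  qed
  have K0: "K \<ge> 0"
    unfolding K_def by (rule QS.Kc_nn[OF order.refl stat[OF order.refl]])
  have ces: "(\<lambda>L. PU L / real L) \<longlonglongrightarrow> QS.c0" unfolding PU_def by (rule cesaro[OF ulim])
  have up: "real L * q L 0 \<le> real L / PU L" if "L \<ge> 1" for L
  proof -
    have a: "q L 0 * PU L \<le> 1" using QS.F1[OF that stat[OF that]] by (simp add: PU_def u_def)
    have p: "PU L > 0" using PU1[of L] by simp
    have "q L 0 \<le> 1 / PU L" using a p by (simp add: field_simps)
    then have "real L * q L 0 \<le> real L * (1 / PU L)" by (rule mult_left_mono) simp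
    then show ?thesis by simp
  qed
  have lo: "real L / (PU L + K) \<le> real L * q L 0" if "L \<ge> 1" for L
  proof -
    have "1 \<le> q L 0 * (PU L + K)" using QS.F2[OF that stat[OF that]] by (simp add: PU_def u_def K_def)
    moreover have p: "PU L + K > 0" using PU1[of L] K0 by linarith
    ultimately have "1 / (PU L + K) \<le> q L 0" by (simp add: field_simps)
    then have "real L * (1 / (PU L + K)) \<le> real L * q L 0" by (rule mult_left_mono) simp
    then show ?thesis by simp
  qed
  have l1: "(\<lambda>L. real L / PU L) \<longlonglongrightarrow> 1 / QS.c0"
  proof -
    have "(\<lambda>L. 1 / (PU L / real L)) \<longlonglongrightarrow> 1 / QS.c0" using c0 by (intro tendsto_intros ces) auto
    moreover have "eventually (\<lambda>L. 1 / (PU L / real L) = real L / PU L) sequentially"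
      by (rule eventually_mono[OF eventually_ge_at_top[of 1]]) simp
    ultimately show ?thesis by (rule Lim_transform_eventually)
  qed
  have l2: "(\<lambda>L. real L / (PU L + K)) \<longlonglongrightarrow> 1 / QS.c0"
  proof -
    have "(\<lambda>L. 1 / (PU L / real L + K / real L)) \<longlonglongrightarrow> 1 / (QS.c0 + 0)"
      using c0 by (intro tendsto_intros ces lim_const_over_n) auto
    then have "(\<lambda>L. 1 / (PU L / real L + K / real L)) \<longlonglongrightarrow> 1 / QS.c0" by simp
    moreover have "eventually (\<lambda>L. 1 / (PU L / real L + K / real L) = real L / (PU L + K)) sequentially"
      by (rule eventually_mono[OF eventually_ge_at_top[of 1]]) (simp add: add_divide_distrib[symmetric])
    ultimately show ?thesis by (rule Lim_transform_eventually)
  qed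
  have q0lim: "(\<lambda>L. real L * q L 0) \<longlonglongrightarrow> 1 / QS.c0"
  proof (rule tendsto_sandwich[OF _ _ l2 l1])
    show "eventually (\<lambda>L. real L / (PU L + K) \<le> real L * q L 0) sequentially"
      by (rule eventually_mono[OF eventually_ge_at_top[of 1]]) (rule lo)
    show "eventually (\<lambda>L. real L * q L 0 \<le> real L / PU L) sequentially"
      by (rule eventually_mono[OF eventually_ge_at_top[of 1]]) (rule up)
  qed
  have ujlim: "(\<lambda>L. u (L - j)) \<longlonglongrightarrow> QS.c0"
    by (rule filterlim_compose[OF ulim QS.RN.fl_minus[OF filterlim_ident]])
  have "(\<lambda>L. real L * q L 0 * u (L - j)) \<longlonglongrightarrow> 1 / QS.c0 * QS.c0"
    by (intro tendsto_intros q0lim ujlim)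
  then have lim: "(\<lambda>L. real L * q L 0 * u (L - j)) \<longlonglongrightarrow> 1" using c0 by simp
  have "eventually (\<lambda>L. real L * q L 0 * u (L - j) = real L * q L (L - j)) sequentially"
  proof (rule eventually_mono[OF eventually_ge_at_top[of 1]])
    fix L :: nat assume L: "L \<ge> 1"
    have "q L (L - j) = q L 0 * u (L - j)"
      unfolding u_def by (rule QS.Q_u[OF L stat[OF L]]) simp
    then show "real L * q L 0 * u (L - j) = real L * q L (L - j)" by simp
  qed
  with lim show ?thesis by (rule Lim_transform_eventually)
qed

end
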